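(* Let $p_S$ be the critical probability of bond percolation on the non-p.c.f. Sierpinski gasket $S$, as defined in the context. Then $p_S<0.282$.
   Context: Non-p.c.f. Sierpinski gasket: $S_0$ is the triangle $\{v_0,v_1,v_2\}$ with its three edges. $S_n$ is obtained from $S_{n-1}$ by replacing each triangle $\{x,y,z\}$ of $S_{n-1}$, together with its own three edges, by new vertices $m_{xy},m_{yz},m_{zx},c$ belonging only to this triangle and the six triangles $\{x,m_{xy},c\},\{m_{xy},y,c\},\{y,m_{yz},c\},\{m_{yz},z,c\},\{z,m_{zx},c\},\{m_{zx},x,c\}$, each carrying its own three edges. Thus distinct triangles have disjoint edge sets and parallel edges occur. For example, $S_1$ has the $6$ outer edges once and each of the $6$ segments from the center $c$ to the outer vertices doubled. $S$ denotes the limiting graph. Bond percolation with parameter $p$: each edge receives an i.i.d. uniform $[0,1]$ label $\omega(e)$ and is open if $\omega(e)<p$. Define $p_S=\sup\{p\in[0,1]:\mathbb{P}_p(\text{there is an open path from } v_0 \text{ to } v_1 \text{ in } S_n)\to 0 \text{ as } n\to\infty\}$. *)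

theory Defs
  imports "HOL-Probability.Probability"
begin

text \<open>Corner i (i < 3) is the original vertex v_i.  New w k (k < 4) is a vertex created
  when subdividing the triangle with address w: k = 0,1,2 are m_xy, m_yz, m_zx and
  k = 3 is the centre c.\<close>
datatype sg_vert = Corner nat | New "nat list" nat

text \<open>Triangles of S_n are addressed by words w over {0..5} of length n; the head of
  the list is the most recent subdivision choice.  sg_tri w = (x,y,z).\<close>
fun sg_child :: "nat list \<Rightarrow> nat \<Rightarrow> sg_vert \<times> sg_vert \<times> sg_vert \<Rightarrow> sg_vert \<times> sg_vert \<times> sg_vert" where
  "sg_child w i (x, y, z) =
     (let mxy = New w 0; myz = New w 1; mzx = New w 2; c = New w 3 in
      if i = 0 then (x, mxy, c)
      else if i = 1 then (mxy, y, c)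
      else if i = 2 then (y, myz, c)
      else if i = 3 then (myz, z, c)
      else if i = 4 then (z, mzx, c)
      else (mzx, x, c))"

fun sg_tri :: "nat list \<Rightarrow> sg_vert \<times> sg_vert \<times> sg_vert" where
  "sg_tri [] = (Corner 0, Corner 1, Corner 2)"
| "sg_tri (i # w) = sg_child w i (sg_tri w)"

text \<open>Edges of S_n: each triangle w carries its own three edges (w, j), j < 3.
  Distinct triangles have disjoint edge sets (parallel edges allowed).\<close>
definition sg_edges :: "nat \<Rightarrow> (nat list \<times> nat) set" where
  "sg_edges n = {(w, j). length w = n \<and> set w \<subseteq> {..<6} \<and> j < 3}"

fun sg_ends :: "nat list \<times> nat \<Rightarrow> sg_vert \<times> sg_vert" where
  "sg_ends (w, j) = (case sg_tri w of (x, y, z) \<Rightarrow>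
      if j = 0 then (x, y) else if j = 1 then (y, z) else (z, x))"

definition sg_open_adj :: "nat \<Rightarrow> (nat list \<times> nat \<Rightarrow> bool) \<Rightarrow> (sg_vert \<times> sg_vert) set" where
  "sg_open_adj n \<omega> = {(u, v). \<exists>e \<in> sg_edges n. \<omega> e \<and>
       (sg_ends e = (u, v) \<or> sg_ends e = (v, u))}"

definition perc_measure :: "real \<Rightarrow> nat \<Rightarrow> (nat list \<times> nat \<Rightarrow> bool) pmf" where
  "perc_measure p n = Pi_pmf (sg_edges n) False (\<lambda>_. bernoulli_pmf p)"

definition crossing_prob :: "real \<Rightarrow> nat \<Rightarrow> real" where
  "crossing_prob p n = measure_pmf.prob (perc_measure p n)
      {\<omega>. (Corner 0, Corner 1) \<in> (sg_open_adj n \<omega>)\<^sup>*}"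

definition p_S :: real where
  "p_S = Sup {p \<in> {0..1}. (\<lambda>n. crossing_prob p n) \<longlonglongrightarrow> 0}"

end

theory Submission
  imports Defs
begin


definition c01 :: "nat \<Rightarrow> bool" where "c01 k \<longleftrightarrow> k = 1 \<or> k = 4"
definition c12 :: "nat \<Rightarrow> bool" where "c12 k \<longleftrightarrow> k = 2 \<or> k = 4"
definition c02 :: "nat \<Rightarrow> bool" where "c02 k \<longleftrightarrow> k = 3 \<or> k = 4"

definition cls :: "bool \<Rightarrow> bool \<Rightarrow> bool \<Rightarrow> nat" where
  "cls a b c = (if (a \<and> b) \<or> (a \<and> c) \<or> (b \<and> c) then 4 else if a then 1 else if b then 2
                else if c then 3 else 0)"

lemma cls_lt: "cls a b c < 5" by (simp add: cls_def)
lemma c01_cls: "c01 (cls a b c) \<longleftrightarrow> a \<or> (b \<and> c)" by (auto simp: cls_def c01_def)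
lemma c12_cls: "c12 (cls a b c) \<longleftrightarrow> b \<or> (a \<and> c)" by (auto simp: cls_def c12_def)
lemma c02_cls: "c02 (cls a b c) \<longleftrightarrow> c \<or> (a \<and> b)" by (auto simp: cls_def c02_def)

definition comb2 :: "nat \<Rightarrow> nat \<Rightarrow> nat" where
  "comb2 k k' = (let a = c01 k; f = c12 k \<or> c02 k'; b = c02 k; d = c01 k'; e = c12 k' in
     cls ((a \<and> d) \<or> (b \<and> e) \<or> (a \<and> f \<and> e) \<or> (b \<and> f \<and> d))
         (e \<or> (d \<and> f) \<or> (d \<and> a \<and> b))
         (b \<or> (a \<and> f) \<or> (a \<and> d \<and> e)))"

definition conn4 :: "bool \<Rightarrow> bool \<Rightarrow> bool \<Rightarrow> bool \<Rightarrow> bool \<Rightarrow> bool \<Rightarrow> bool" where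
  "conn4 AB AC CB AZ ZB CZ \<longleftrightarrow> AB \<or> (AC \<and> CB) \<or> (AZ \<and> ZB) \<or> (AC \<and> CZ \<and> ZB) \<or> (AZ \<and> CZ \<and> CB)"

definition comb3 :: "nat \<Rightarrow> nat \<Rightarrow> nat \<Rightarrow> nat" where
  "comb3 q0 q1 q2 = (let XY = c01 q0; YZ = c01 q1; ZX = c01 q2;
      XC = c02 q0 \<or> c12 q2; YC = c12 q0 \<or> c02 q1; ZC = c12 q1 \<or> c02 q2 in
     cls (conn4 XY XC YC ZX YZ ZC) (conn4 YZ YC ZC XY ZX XC) (conn4 ZX XC ZC XY YZ YC))"

fun pat :: "nat \<Rightarrow> (nat list \<times> nat \<Rightarrow> bool) \<Rightarrow> nat list \<Rightarrow> nat" where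
  "pat 0 \<omega> w = cls (\<omega> (w,0)) (\<omega> (w,1)) (\<omega> (w,2))"
| "pat (Suc n) \<omega> w = comb3 (comb2 (pat n \<omega> (0#w)) (pat n \<omega> (1#w)))
      (comb2 (pat n \<omega> (2#w)) (pat n \<omega> (3#w))) (comb2 (pat n \<omega> (4#w)) (pat n \<omega> (5#w)))"

lemma pat_lt: "pat n \<omega> w < 5"
  by (cases n) (auto simp: comb3_def cls_lt Let_def)

locale eqr = fixes R :: "('a \<times> 'a) set" assumes tr: "trans R" and sy: "sym R"
begin
lemma t: "(x,y) \<in> R \<Longrightarrow> (y,z) \<in> R \<Longrightarrow> (x,z) \<in> R" using tr by (meson transD)
lemma s: "(x,y) \<in> R \<Longrightarrow> (y,x) \<in> R" using sy by (meson symD)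

lemma cls_sound:
  assumes A: "a \<Longrightarrow> (x,y) \<in> R" and B: "b \<Longrightarrow> (y,z) \<in> R" and C: "c \<Longrightarrow> (x,z) \<in> R"
  shows "(c01 (cls a b c) \<longrightarrow> (x,y) \<in> R) \<and> (c12 (cls a b c) \<longrightarrow> (y,z) \<in> R)
       \<and> (c02 (cls a b c) \<longrightarrow> (x,z) \<in> R)"
  unfolding c01_cls c12_cls c02_cls
proof (intro conjI impI)
  show "a \<or> b \<and> c \<Longrightarrow> (x, y) \<in> R"
  proof (elim disjE conjE)
    show "b \<Longrightarrow> c \<Longrightarrow> (x, y) \<in> R" by (rule t[OF C s[OF B]])
  qed (rule A)
  show "b \<or> a \<and> c \<Longrightarrow> (y, z) \<in> R"
  proof (elim disjE conjE)
    show "a \<Longrightarrow> c \<Longrightarrow> (y, z) \<in> R" by (rule t[OF s[OF A] C])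
  qed (rule B)
  show "c \<or> a \<and> b \<Longrightarrow> (x, z) \<in> R"
  proof (elim disjE conjE)
    show "a \<Longrightarrow> b \<Longrightarrow> (x, z) \<in> R" by (rule t[OF A B])
  qed (rule C)
qed

lemma comb2_sound:
  assumes A: "c01 k \<Longrightarrow> (s0,m) \<in> R" and F1: "c12 k \<Longrightarrow> (m,c) \<in> R" and B: "c02 k \<Longrightarrow> (s0,c) \<in> R"
    and D: "c01 k' \<Longrightarrow> (m,s1) \<in> R" and E: "c12 k' \<Longrightarrow> (s1,c) \<in> R" and F2: "c02 k' \<Longrightarrow> (m,c) \<in> R"
  shows "(c01 (comb2 k k') \<longrightarrow> (s0,s1) \<in> R) \<and> (c12 (comb2 k k') \<longrightarrow> (s1,c) \<in> R)
       \<and> (c02 (comb2 k k') \<longrightarrow> (s0,c) \<in> R)"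
  unfolding comb2_def Let_def
proof (rule cls_sound)
  have F: "c12 k \<or> c02 k' \<Longrightarrow> (m,c) \<in> R" using F1 F2 by blast
  have p1: "c01 k \<Longrightarrow> c01 k' \<Longrightarrow> (s0, s1) \<in> R" by (rule t[OF A D])
  have p2: "c02 k \<Longrightarrow> c12 k' \<Longrightarrow> (s0, s1) \<in> R" by (rule t[OF B s[OF E]])
  have p3: "c01 k \<Longrightarrow> c12 k \<or> c02 k' \<Longrightarrow> c12 k' \<Longrightarrow> (s0, s1) \<in> R" by (rule t[OF t[OF A F] s[OF E]])
  have p4: "c02 k \<Longrightarrow> c12 k \<or> c02 k' \<Longrightarrow> c01 k' \<Longrightarrow> (s0, s1) \<in> R" by (rule t[OF t[OF B s[OF F]] D])
  show "c01 k \<and> c01 k' \<or> c02 k \<and> c12 k' \<or> c01 k \<and> (c12 k \<or> c02 k') \<and> c12 k' \<or> c02 k \<and> (c12 k \<or> c02 k') \<and> c01 k' \<Longrightarrow> (s0, s1) \<in> R"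
    using p1 p2 p3 p4 by blast
  have q2: "c01 k' \<Longrightarrow> c12 k \<or> c02 k' \<Longrightarrow> (s1, c) \<in> R" by (rule t[OF s[OF D] F])
  have q3: "c01 k' \<Longrightarrow> c01 k \<Longrightarrow> c02 k \<Longrightarrow> (s1, c) \<in> R" by (rule t[OF t[OF s[OF D] s[OF A]] B])
  show "c12 k' \<or> c01 k' \<and> (c12 k \<or> c02 k') \<or> c01 k' \<and> c01 k \<and> c02 k \<Longrightarrow> (s1, c) \<in> R"
    using E q2 q3 by blast
  have r2: "c01 k \<Longrightarrow> c12 k \<or> c02 k' \<Longrightarrow> (s0, c) \<in> R" by (rule t[OF A F])
  have r3: "c01 k \<Longrightarrow> c01 k' \<Longrightarrow> c12 k' \<Longrightarrow> (s0, c) \<in> R" by (rule t[OF t[OF A D] E])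
  show "c02 k \<or> c01 k \<and> (c12 k \<or> c02 k') \<or> c01 k \<and> c01 k' \<and> c12 k' \<Longrightarrow> (s0, c) \<in> R"
    using B r2 r3 by blast
qed

lemma conn4_sound:
  assumes H: "conn4 AB AC CB AZ ZB CZ" and AB: "AB \<Longrightarrow> (a,b) \<in> R" and AC: "AC \<Longrightarrow> (a,c) \<in> R" and CB: "CB \<Longrightarrow> (c,b) \<in> R"
     and AZ: "AZ \<Longrightarrow> (a,z) \<in> R" and ZB: "ZB \<Longrightarrow> (z,b) \<in> R" and CZ: "CZ \<Longrightarrow> (c,z) \<in> R"
  shows "(a,b) \<in> R"
  using H unfolding conn4_def
proof (elim disjE conjE)
  show "AB \<Longrightarrow> (a,b) \<in> R" by (rule AB)
  show "AC \<Longrightarrow> CB \<Longrightarrow> (a,b) \<in> R" by (rule t[OF AC CB])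
  show "AZ \<Longrightarrow> ZB \<Longrightarrow> (a,b) \<in> R" by (rule t[OF AZ ZB])
  show "AC \<Longrightarrow> CZ \<Longrightarrow> ZB \<Longrightarrow> (a,b) \<in> R" by (rule t[OF t[OF AC CZ] ZB])
  show "AZ \<Longrightarrow> CZ \<Longrightarrow> CB \<Longrightarrow> (a,b) \<in> R" by (rule t[OF t[OF AZ s[OF CZ]] CB])
qed

lemma comb3_sound:
  assumes "c01 q0 \<Longrightarrow> (x,y) \<in> R" "c12 q0 \<Longrightarrow> (y,c) \<in> R" "c02 q0 \<Longrightarrow> (x,c) \<in> R"
    "c01 q1 \<Longrightarrow> (y,z) \<in> R" "c12 q1 \<Longrightarrow> (z,c) \<in> R" "c02 q1 \<Longrightarrow> (y,c) \<in> R"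
    "c01 q2 \<Longrightarrow> (z,x) \<in> R" "c12 q2 \<Longrightarrow> (x,c) \<in> R" "c02 q2 \<Longrightarrow> (z,c) \<in> R"
  shows "(c01 (comb3 q0 q1 q2) \<longrightarrow> (x,y) \<in> R) \<and> (c12 (comb3 q0 q1 q2) \<longrightarrow> (y,z) \<in> R)
       \<and> (c02 (comb3 q0 q1 q2) \<longrightarrow> (x,z) \<in> R)"
proof -
  have XY: "c01 q0 \<Longrightarrow> (x,y) \<in> R" "c01 q0 \<Longrightarrow> (y,x) \<in> R" using assms s by blast+
  have YZ: "c01 q1 \<Longrightarrow> (y,z) \<in> R" "c01 q1 \<Longrightarrow> (z,y) \<in> R" using assms s by blast+
  have ZX: "c01 q2 \<Longrightarrow> (z,x) \<in> R" "c01 q2 \<Longrightarrow> (x,z) \<in> R" using assms s by blast+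
  have XC: "c02 q0 \<or> c12 q2 \<Longrightarrow> (x,c) \<in> R" "c02 q0 \<or> c12 q2 \<Longrightarrow> (c,x) \<in> R" using assms s by blast+
  have YC: "c12 q0 \<or> c02 q1 \<Longrightarrow> (y,c) \<in> R" "c12 q0 \<or> c02 q1 \<Longrightarrow> (c,y) \<in> R" using assms s by blast+
  have ZC: "c12 q1 \<or> c02 q2 \<Longrightarrow> (z,c) \<in> R" "c12 q1 \<or> c02 q2 \<Longrightarrow> (c,z) \<in> R" using assms s by blast+
  show ?thesis unfolding comb3_def Let_def
    by (rule cls_sound; erule conn4_sound) (rule XY YZ ZX XC YC ZC; assumption)+
qed
end

lemma adj_sym: "sym (sg_open_adj N \<omega>)"
  unfolding sg_open_adj_def sym_def by blast

lemma eqr_adj: "eqr ((sg_open_adj N \<omega>)\<^sup>*)"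
  by unfold_locales (auto simp: adj_sym sym_rtrancl trans_rtrancl)

lemma edge_in: "set w \<subseteq> {..<6} \<Longrightarrow> j < 3 \<Longrightarrow> \<omega> (w,j) \<Longrightarrow> sg_ends (w,j) = (u,v) \<Longrightarrow>
   (u,v) \<in> (sg_open_adj (length w) \<omega>)\<^sup>*"
  unfolding sg_open_adj_def sg_edges_def by (rule r_into_rtrancl) auto

lemma sound:
  assumes "set w \<subseteq> {..<6}" "sg_tri w = (x,y,z)"
  shows "(c01 (pat n \<omega> w) \<longrightarrow> (x,y) \<in> (sg_open_adj (n + length w) \<omega>)\<^sup>*)
       \<and> (c12 (pat n \<omega> w) \<longrightarrow> (y,z) \<in> (sg_open_adj (n + length w) \<omega>)\<^sup>*)
       \<and> (c02 (pat n \<omega> w) \<longrightarrow> (x,z) \<in> (sg_open_adj (n + length w) \<omega>)\<^sup>*)"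
  using assms
proof (induction n arbitrary: w x y z)
  case 0
  interpret eqr "(sg_open_adj (length w) \<omega>)\<^sup>*" by (rule eqr_adj)
  have e0: "\<omega> (w,0) \<Longrightarrow> (x,y) \<in> (sg_open_adj (length w) \<omega>)\<^sup>*"
    by (rule edge_in) (use 0 in auto)
  have e1: "\<omega> (w,1) \<Longrightarrow> (y,z) \<in> (sg_open_adj (length w) \<omega>)\<^sup>*"
    by (rule edge_in) (use 0 in auto)
  have e2: "\<omega> (w,2) \<Longrightarrow> (x,z) \<in> (sg_open_adj (length w) \<omega>)\<^sup>*"
    by (rule s, rule edge_in) (use 0 in auto)
  show ?case using cls_sound[OF e0 e1 e2] by simp
next
  case (Suc n)
  let ?R = "(sg_open_adj (Suc (n + length w)) \<omega>)\<^sup>*"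
  interpret eqr ?R by (rule eqr_adj)
  have IH: "\<And>i. i < 6 \<Longrightarrow> (c01 (pat n \<omega> (i#w)) \<longrightarrow> (fst (sg_tri (i#w)), fst (snd (sg_tri (i#w)))) \<in> ?R)
       \<and> (c12 (pat n \<omega> (i#w)) \<longrightarrow> (fst (snd (sg_tri (i#w))), snd (snd (sg_tri (i#w)))) \<in> ?R)
       \<and> (c02 (pat n \<omega> (i#w)) \<longrightarrow> (fst (sg_tri (i#w)), snd (snd (sg_tri (i#w)))) \<in> ?R)"
  proof -
    fix i :: nat assume i: "i < 6"
    obtain a b c where abc: "sg_tri (i#w) = (a,b,c)" by (cases "sg_tri (i#w)") auto
    have "set (i#w) \<subseteq> {..<6}" using i Suc.prems by auto
    from Suc.IH[OF this abc] show "?thesis i" by (simp only: abc fst_conv snd_conv) simp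
  qed
  have tri: "\<And>i. sg_tri (i#w) = sg_child w i (x,y,z)" using Suc.prems by simp
  note I0 = IH[of 0, unfolded tri, simplified]
  note I1 = IH[of 1, unfolded tri, simplified]
  note I2 = IH[of 2, unfolded tri, simplified]
  note I3 = IH[of 3, unfolded tri, simplified]
  note I4 = IH[of 4, unfolded tri, simplified]
  note I5 = IH[of 5, unfolded tri, simplified]

  let ?c = "New w 3"
  have S0: "(c01 (comb2 (pat n \<omega> (0#w)) (pat n \<omega> (1#w))) \<longrightarrow> (x,y) \<in> ?R)
     \<and> (c12 (comb2 (pat n \<omega> (0#w)) (pat n \<omega> (1#w))) \<longrightarrow> (y,?c) \<in> ?R)
     \<and> (c02 (comb2 (pat n \<omega> (0#w)) (pat n \<omega> (1#w))) \<longrightarrow> (x,?c) \<in> ?R)"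
    by (rule comb2_sound[where m="New w 0"]) (use I0 I1 in \<open>simp_all add: One_nat_def\<close>)
  have S1: "(c01 (comb2 (pat n \<omega> (2#w)) (pat n \<omega> (3#w))) \<longrightarrow> (y,z) \<in> ?R)
     \<and> (c12 (comb2 (pat n \<omega> (2#w)) (pat n \<omega> (3#w))) \<longrightarrow> (z,?c) \<in> ?R)
     \<and> (c02 (comb2 (pat n \<omega> (2#w)) (pat n \<omega> (3#w))) \<longrightarrow> (y,?c) \<in> ?R)"
    by (rule comb2_sound[where m="New w 1"]) (use I2 I3 in \<open>simp_all add: One_nat_def\<close>)
  have S2: "(c01 (comb2 (pat n \<omega> (4#w)) (pat n \<omega> (5#w))) \<longrightarrow> (z,x) \<in> ?R)
     \<and> (c12 (comb2 (pat n \<omega> (4#w)) (pat n \<omega> (5#w))) \<longrightarrow> (x,?c) \<in> ?R)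
     \<and> (c02 (comb2 (pat n \<omega> (4#w)) (pat n \<omega> (5#w))) \<longrightarrow> (z,?c) \<in> ?R)"
    by (rule comb2_sound[where m="New w 2"]) (use I4 I5 in \<open>simp_all add: One_nat_def\<close>)
  have "(c01 (pat (Suc n) \<omega> w) \<longrightarrow> (x,y) \<in> ?R) \<and> (c12 (pat (Suc n) \<omega> w) \<longrightarrow> (y,z) \<in> ?R)
       \<and> (c02 (pat (Suc n) \<omega> w) \<longrightarrow> (x,z) \<in> ?R)"
    unfolding pat.simps by (rule comb3_sound[where c="?c"]) (use S0 S1 S2 in blast)+
  then show ?case by simp
qed



lemma pat_shift: "pat n \<omega> (w @ [i]) = pat n (\<lambda>(u,j). \<omega> (u @ [i], j)) w"
proof (induction n arbitrary: w)
  case (Suc n)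
  show ?case using Suc.IH[of "0#w"] Suc.IH[of "1#w"] Suc.IH[of "2#w"] Suc.IH[of "3#w"]
      Suc.IH[of "4#w"] Suc.IH[of "5#w"] by simp
qed simp

definition lec :: "nat \<Rightarrow> nat \<Rightarrow> bool" where
  "lec k k' \<longleftrightarrow> (c01 k \<longrightarrow> c01 k') \<and> (c12 k \<longrightarrow> c12 k') \<and> (c02 k \<longrightarrow> c02 k')"

lemma lec_refl[simp]: "lec k k" by (simp add: lec_def)

lemma cls_mono: "(a \<longrightarrow> a') \<Longrightarrow> (b \<longrightarrow> b') \<Longrightarrow> (c \<longrightarrow> c') \<Longrightarrow> lec (cls a b c) (cls a' b' c')"
  by (auto simp: lec_def c01_cls c12_cls c02_cls)

lemma comb2_mono: "lec k l \<Longrightarrow> lec k' l' \<Longrightarrow> lec (comb2 k k') (comb2 l l')"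
  unfolding comb2_def Let_def by (rule cls_mono) (auto simp: lec_def)

lemma comb3_mono: "lec q0 r0 \<Longrightarrow> lec q1 r1 \<Longrightarrow> lec q2 r2 \<Longrightarrow> lec (comb3 q0 q1 q2) (comb3 r0 r1 r2)"
  unfolding comb3_def Let_def by (rule cls_mono) (auto simp: lec_def conn4_def)

definition CombL :: "nat list \<Rightarrow> nat" where
  "CombL l = comb3 (comb2 (l!0) (l!1)) (comb2 (l!2) (l!3)) (comb2 (l!4) (l!5))"

lemma CombL_mono:
  assumes "list_all2 lec l l'" "length l = 6"
  shows "lec (CombL l) (CombL l')"
proof -
  have "\<And>i. i < 6 \<Longrightarrow> lec (l!i) (l'!i)" using assms list_all2_nthD by fastforce
  then show ?thesis unfolding CombL_def by (intro comb3_mono comb2_mono) auto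
qed

lemma CombL_lt: "CombL l < 5" by (simp add: CombL_def comb3_def cls_lt Let_def)

fun G :: "'a set \<Rightarrow> ('a \<Rightarrow> real) list \<Rightarrow> ('a list \<Rightarrow> real) \<Rightarrow> real" where
  "G S [] h = h []"
| "G S (\<mu> # \<mu>s) h = (\<Sum>k\<in>S. \<mu> k * G S \<mu>s (\<lambda>l. h (k # l)))"

definition nonneg :: "'a set \<Rightarrow> ('a \<Rightarrow> real) list \<Rightarrow> bool" where
  "nonneg S \<mu>s \<longleftrightarrow> (\<forall>\<mu>\<in>set \<mu>s. \<forall>k\<in>S. 0 \<le> \<mu> k)"

lemma G_mono_h: "(\<And>l. length l = length \<mu>s \<Longrightarrow> h l \<le> h' l) \<Longrightarrow> nonneg S \<mu>s \<Longrightarrow> G S \<mu>s h \<le> G S \<mu>s h'"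
proof (induction \<mu>s arbitrary: h h')
  case (Cons \<mu> \<mu>s)
  have "nonneg S \<mu>s" using Cons.prems by (simp add: nonneg_def)
  then have "\<And>k. G S \<mu>s (\<lambda>l. h (k # l)) \<le> G S \<mu>s (\<lambda>l. h' (k # l))"
    using Cons.prems by (intro Cons.IH) auto
  then show ?case using Cons.prems by (auto simp: nonneg_def intro!: sum_mono mult_left_mono)
qed simp

lemma G_nonneg: "(\<And>l. 0 \<le> h l) \<Longrightarrow> nonneg S \<mu>s \<Longrightarrow> 0 \<le> G S \<mu>s h"
proof (induction \<mu>s arbitrary: h)
  case (Cons \<mu> \<mu>s)
  have "nonneg S \<mu>s" using Cons.prems by (simp add: nonneg_def)
  then show ?case using Cons by (auto simp: nonneg_def intro!: sum_nonneg mult_nonneg_nonneg)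
qed simp

definition ups :: "nat set list" where
  "ups = [{4},{1,4},{2,4},{3,4},{1,2,4},{1,3,4},{2,3,4},{1,2,3,4},{0,1,2,3,4}]"

definition domi :: "(nat \<Rightarrow> real) \<Rightarrow> (nat \<Rightarrow> real) \<Rightarrow> bool" where
  "domi \<mu> \<nu> \<longleftrightarrow> (\<forall>U\<in>set ups. sum \<mu> U \<le> sum \<nu> U)"

lemma key:
  fixes m0 ma mb mc m4 n0 na nb nc n4 f0 fa fb fc f4 :: real
  assumes "0 \<le> f0" "f0 \<le> fa" "fa \<le> fb" "fb \<le> fc" "fc \<le> f4"
    "ma+mb+mc+m4+m0 \<le> na+nb+nc+n4+n0" "ma+mb+mc+m4 \<le> na+nb+nc+n4" "mb+mc+m4 \<le> nb+nc+n4"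
    "mc+m4 \<le> nc+n4" "m4 \<le> n4"
  shows "m0*f0 + ma*fa + mb*fb + mc*fc + m4*f4 \<le> n0*f0 + na*fa + nb*fb + nc*fc + n4*f4"
proof -
  have e: "(n0*f0 + na*fa + nb*fb + nc*fc + n4*f4) - (m0*f0 + ma*fa + mb*fb + mc*fc + m4*f4)
    = f0 * ((na+nb+nc+n4+n0) - (ma+mb+mc+m4+m0)) + (fa - f0) * ((na+nb+nc+n4) - (ma+mb+mc+m4))
      + (fb - fa) * ((nb+nc+n4) - (mb+mc+m4)) + (fc - fb) * ((nc+n4) - (mc+m4)) + (f4 - fc) * (n4 - m4)"
    by (simp add: algebra_simps)
  have "0 \<le> f0 * ((na+nb+nc+n4+n0) - (ma+mb+mc+m4+m0))" using assms by simp
  moreover have "0 \<le> (fa - f0) * ((na+nb+nc+n4) - (ma+mb+mc+m4))" using assms by simp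
  moreover have "0 \<le> (fb - fa) * ((nb+nc+n4) - (mb+mc+m4))" using assms by simp
  moreover have "0 \<le> (fc - fb) * ((nc+n4) - (mc+m4))" using assms by simp
  moreover have "0 \<le> (f4 - fc) * (n4 - m4)" using assms by simp
  ultimately show ?thesis using e by linarith
qed

lemma sum5: "(\<Sum>k<5. (f::nat\<Rightarrow>real) k) = f 0 + f 1 + f 2 + f 3 + (f 4 :: real)"
  by (simp add: numeral_eq_Suc)

lemma five_point:
  assumes d: "domi \<mu> \<nu>" and m: "\<And>k k'. k < 5 \<Longrightarrow> k' < 5 \<Longrightarrow> lec k k' \<Longrightarrow> \<phi> k \<le> \<phi> k'"
    and z: "0 \<le> \<phi> 0"
  shows "(\<Sum>k<5. \<mu> k * \<phi> k) \<le> (\<Sum>k<5. \<nu> k * \<phi> k)"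
proof -
  have D: "\<mu> 4 \<le> \<nu> 4" "\<mu> 1 + \<mu> 4 \<le> \<nu> 1 + \<nu> 4" "\<mu> 2 + \<mu> 4 \<le> \<nu> 2 + \<nu> 4" "\<mu> 3 + \<mu> 4 \<le> \<nu> 3 + \<nu> 4"
    "\<mu> 1 + \<mu> 2 + \<mu> 4 \<le> \<nu> 1 + \<nu> 2 + \<nu> 4" "\<mu> 1 + \<mu> 3 + \<mu> 4 \<le> \<nu> 1 + \<nu> 3 + \<nu> 4"
    "\<mu> 2 + \<mu> 3 + \<mu> 4 \<le> \<nu> 2 + \<nu> 3 + \<nu> 4" "\<mu> 1 + \<mu> 2 + \<mu> 3 + \<mu> 4 \<le> \<nu> 1 + \<nu> 2 + \<nu> 3 + \<nu> 4"
    "\<mu> 0 + \<mu> 1 + \<mu> 2 + \<mu> 3 + \<mu> 4 \<le> \<nu> 0 + \<nu> 1 + \<nu> 2 + \<nu> 3 + \<nu> 4"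
    using d unfolding domi_def ups_def by (simp_all add: algebra_simps)
  have M: "\<phi> 0 \<le> \<phi> 1" "\<phi> 0 \<le> \<phi> 2" "\<phi> 0 \<le> \<phi> 3" "\<phi> 1 \<le> \<phi> 4" "\<phi> 2 \<le> \<phi> 4" "\<phi> 3 \<le> \<phi> 4"
    by (rule m; simp add: lec_def c01_def c12_def c02_def)+
  have "\<mu> 0 * \<phi> 0 + \<mu> 1 * \<phi> 1 + \<mu> 2 * \<phi> 2 + \<mu> 3 * \<phi> 3 + \<mu> 4 * \<phi> 4
     \<le> \<nu> 0 * \<phi> 0 + \<nu> 1 * \<phi> 1 + \<nu> 2 * \<phi> 2 + \<nu> 3 * \<phi> 3 + \<nu> 4 * \<phi> 4"
  proof -
    consider "\<phi> 1 \<le> \<phi> 2" "\<phi> 2 \<le> \<phi> 3" | "\<phi> 1 \<le> \<phi> 3" "\<phi> 3 \<le> \<phi> 2"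
      | "\<phi> 2 \<le> \<phi> 1" "\<phi> 1 \<le> \<phi> 3" | "\<phi> 2 \<le> \<phi> 3" "\<phi> 3 \<le> \<phi> 1"
      | "\<phi> 3 \<le> \<phi> 1" "\<phi> 1 \<le> \<phi> 2" | "\<phi> 3 \<le> \<phi> 2" "\<phi> 2 \<le> \<phi> 1" by linarith
    then show ?thesis
    proof cases
      case 1 show ?thesis using key[of "\<phi> 0" "\<phi> 1" "\<phi> 2" "\<phi> 3" "\<phi> 4" "\<mu> 1" "\<mu> 2" "\<mu> 3" "\<mu> 4" "\<mu> 0"
          "\<nu> 1" "\<nu> 2" "\<nu> 3" "\<nu> 4" "\<nu> 0"] z M D 1 by (simp add: algebra_simps)
    next
      case 2 show ?thesis using key[of "\<phi> 0" "\<phi> 1" "\<phi> 3" "\<phi> 2" "\<phi> 4" "\<mu> 1" "\<mu> 3" "\<mu> 2" "\<mu> 4" "\<mu> 0"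
          "\<nu> 1" "\<nu> 3" "\<nu> 2" "\<nu> 4" "\<nu> 0"] z M D 2 by (simp add: algebra_simps)
    next
      case 3 show ?thesis using key[of "\<phi> 0" "\<phi> 2" "\<phi> 1" "\<phi> 3" "\<phi> 4" "\<mu> 2" "\<mu> 1" "\<mu> 3" "\<mu> 4" "\<mu> 0"
          "\<nu> 2" "\<nu> 1" "\<nu> 3" "\<nu> 4" "\<nu> 0"] z M D 3 by (simp add: algebra_simps)
    next
      case 4 show ?thesis using key[of "\<phi> 0" "\<phi> 2" "\<phi> 3" "\<phi> 1" "\<phi> 4" "\<mu> 2" "\<mu> 3" "\<mu> 1" "\<mu> 4" "\<mu> 0"
          "\<nu> 2" "\<nu> 3" "\<nu> 1" "\<nu> 4" "\<nu> 0"] z M D 4 by (simp add: algebra_simps)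
    next
      case 5 show ?thesis using key[of "\<phi> 0" "\<phi> 3" "\<phi> 1" "\<phi> 2" "\<phi> 4" "\<mu> 3" "\<mu> 1" "\<mu> 2" "\<mu> 4" "\<mu> 0"
          "\<nu> 3" "\<nu> 1" "\<nu> 2" "\<nu> 4" "\<nu> 0"] z M D 5 by (simp add: algebra_simps)
    next
      case 6 show ?thesis using key[of "\<phi> 0" "\<phi> 3" "\<phi> 2" "\<phi> 1" "\<phi> 4" "\<mu> 3" "\<mu> 2" "\<mu> 1" "\<mu> 4" "\<mu> 0"
          "\<nu> 3" "\<nu> 2" "\<nu> 1" "\<nu> 4" "\<nu> 0"] z M D 6 by (simp add: algebra_simps)
    qed
  qed
  then show ?thesis by (simp add: sum5)
qed

lemma G_dom:
  assumes "list_all2 domi \<mu>s \<nu>s" "nonneg {..<5} \<mu>s" "nonneg {..<5} \<nu>s"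
    "\<And>l. 0 \<le> h l" "\<And>l l'. list_all2 lec l l' \<Longrightarrow> length l = length \<mu>s \<Longrightarrow> h l \<le> h l'"
  shows "G {..<5} \<mu>s h \<le> G {..<5} \<nu>s h"
  using assms
proof (induction \<mu>s arbitrary: \<nu>s h)
  case Nil then show ?case by simp
next
  case (Cons \<mu> \<mu>s)
  then obtain \<nu> \<nu>s' where nu: "\<nu>s = \<nu> # \<nu>s'" "domi \<mu> \<nu>" "list_all2 domi \<mu>s \<nu>s'"
    by (cases \<nu>s) auto
  have nn: "nonneg {..<5} \<mu>s" "nonneg {..<5} \<nu>s'" "\<forall>k<5. 0 \<le> \<mu> k" "\<forall>k<5. 0 \<le> \<nu> k"
    using Cons.prems nu by (auto simp: nonneg_def)
  have len: "length \<nu>s' = length \<mu>s" using nu(3) list_all2_lengthD by metis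
  have step1: "G {..<5} \<mu>s (\<lambda>l. h (k#l)) \<le> G {..<5} \<nu>s' (\<lambda>l. h (k#l))" for k
    by (rule Cons.IH) (use nu nn Cons.prems in auto)
  have "G {..<5} (\<mu>#\<mu>s) h \<le> (\<Sum>k<5. \<mu> k * G {..<5} \<nu>s' (\<lambda>l. h (k#l)))"
    using step1 nn by (auto intro!: sum_mono mult_left_mono)
  also have "\<dots> \<le> (\<Sum>k<5. \<nu> k * G {..<5} \<nu>s' (\<lambda>l. h (k#l)))"
  proof (rule five_point[OF nu(2)])
    show "0 \<le> G {..<5} \<nu>s' (\<lambda>l. h (0 # l))" using nn Cons.prems by (intro G_nonneg) auto
    fix k k' :: nat assume "lec k k'"
    then have "\<And>l. length l = length \<nu>s' \<Longrightarrow> h (k#l) \<le> h (k'#l)" using Cons.prems(5) len by (simp add: list_all2_refl)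
    then show "G {..<5} \<nu>s' (\<lambda>l. h (k # l)) \<le> G {..<5} \<nu>s' (\<lambda>l. h (k' # l))"
      using nn by (intro G_mono_h) auto
  qed
  finally show ?case using nu by simp
qed



definition w :: "nat \<Rightarrow> real" where
  "w k = (if k = 0 then 27/64 else if k = 4 then 10/64 else if k < 4 then 9/64 else 0)"
definition sig :: "nat \<Rightarrow> real" where
  "sig k = (if k = 0 then 1782/4096 else if k = 1 then 81/4096 else if k = 4 then 541/4096
            else if k < 4 then 846/4096 else 0)"
definition phi :: "nat \<Rightarrow> real" where
  "phi k = (if k = 0 then 25603961328/68719476736 else if k = 4 then 14209976260/68719476736
            else if k < 4 then 9635179716/68719476736 else 0)"

lemma R2: "(\<Sum>a<5. w a * (\<Sum>b<5. w b * f (comb2 a b))) = (\<Sum>q<5. sig q * f q)"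
  by (simp add: sum5 w_def sig_def comb2_def Let_def cls_def c01_def c12_def c02_def) (simp add: field_simps)

lemma R3: "(\<Sum>a<5. sig a * (\<Sum>b<5. sig b * (\<Sum>c<5. sig c * f (comb3 a b c)))) = (\<Sum>q<5. phi q * f q)"
  by (simp add: sum5 sig_def phi_def comb3_def conn4_def Let_def cls_def c01_def c12_def c02_def) (simp add: field_simps)

lemma replicate6: "replicate 6 x = [x,x,x,x,x,x]" by (simp add: numeral_eq_Suc)

lemma G6: "G {..<5} (replicate 6 w) (\<lambda>l. f (CombL l)) = (\<Sum>q<5. phi q * f q)"
proof -
  have i1: "\<And>X Y. (\<Sum>a<5. w a * (\<Sum>b<5. w b * f (comb3 X Y (comb2 a b)))) = (\<Sum>q<5. sig q * f (comb3 X Y q))"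
    by (rule R2)
  have i2: "\<And>X. (\<Sum>a<5. w a * (\<Sum>b<5. w b * (\<Sum>q<5. sig q * f (comb3 X (comb2 a b) q))))
     = (\<Sum>r<5. sig r * (\<Sum>q<5. sig q * f (comb3 X r q)))"
    by (rule R2)
  have i3: "(\<Sum>a<5. w a * (\<Sum>b<5. w b * (\<Sum>r<5. sig r * (\<Sum>q<5. sig q * f (comb3 (comb2 a b) r q)))))
     = (\<Sum>a<5. sig a * (\<Sum>r<5. sig r * (\<Sum>q<5. sig q * f (comb3 a r q))))"
    by (rule R2)
  have "G {..<5} (replicate 6 w) (\<lambda>l. f (CombL l)) =
    (\<Sum>a0<5. w a0 * (\<Sum>a1<5. w a1 * (\<Sum>a2<5. w a2 * (\<Sum>a3<5. w a3 * (\<Sum>a4<5. w a4 *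
       (\<Sum>a5<5. w a5 * f (comb3 (comb2 a0 a1) (comb2 a2 a3) (comb2 a4 a5))))))))"
    by (simp add: replicate6 CombL_def)
  also have "\<dots> = (\<Sum>q<5. phi q * f q)"
    by (simp only: i1 i2 i3 R3)
  finally show ?thesis .
qed

lemma up_ups: "U \<in> set ups \<Longrightarrow> k < 5 \<Longrightarrow> k' < 5 \<Longrightarrow> lec k k' \<Longrightarrow> k \<in> U \<Longrightarrow> k' \<in> U"
proof -
  assume a: "U \<in> set ups" "k < 5" "k' < 5" "lec k k'" "k \<in> U"
  have "k \<in> {0,1,2,3,4}" "k' \<in> {0,1,2,3,4}" using a by auto
  then show ?thesis using a by (auto simp: ups_def lec_def c01_def c12_def c02_def)
qed

lemma num_dom: "U \<in> set ups \<Longrightarrow> sum w U \<le> (\<Sum>q<5. phi q * indicator U q)"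
  by (auto simp: ups_def sum5 w_def phi_def)



lemma fin_meas:
  assumes "finite A" "set_pmf M \<subseteq> A"
  shows "measure_pmf.prob M X = (\<Sum>a\<in>A. pmf M a * indicator X a)"
proof -
  have "measure_pmf.prob M X = measure_pmf.prob M (X \<inter> set_pmf M)"
    by (simp add: measure_Int_set_pmf)
  also have "\<dots> = sum (pmf M) (X \<inter> set_pmf M)"
    using assms by (intro measure_measure_pmf_finite) (auto intro: finite_subset)
  also have "\<dots> = sum (pmf M) (A \<inter> X)"
    using assms by (intro sum.mono_neutral_left) (auto simp: set_pmf_eq)
  also have "\<dots> = (\<Sum>a\<in>A. pmf M a * indicator X a)"
    using assms by (simp add: sum.inter_restrict indicator_def)
  finally show ?thesis .
qed

lemma pair_meas:
  assumes "finite A" "set_pmf M \<subseteq> A" "finite B" "set_pmf N \<subseteq> B"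
  shows "measure_pmf.prob (pair_pmf M N) Y = (\<Sum>a\<in>A. pmf M a * measure_pmf.prob N {t. (a,t) \<in> Y})"
proof -
  have "measure_pmf.prob (pair_pmf M N) Y = (\<Sum>x\<in>A \<times> B. pmf (pair_pmf M N) x * indicator Y x)"
    using assms by (intro fin_meas) auto
  also have "\<dots> = (\<Sum>(a,b)\<in>A \<times> B. pmf M a * (pmf N b * indicator Y (a,b)))"
    by (rule sum.cong) (auto simp: pmf_pair)
  also have "\<dots> = (\<Sum>a\<in>A. \<Sum>b\<in>B. pmf M a * (pmf N b * indicator Y (a,b)))"
    by (simp add: sum.cartesian_product)
  also have "\<dots> = (\<Sum>a\<in>A. pmf M a * (\<Sum>b\<in>B. pmf N b * indicator {t. (a,t) \<in> Y} b))"
    by (simp add: sum_distrib_left indicator_def)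
  also have "\<dots> = (\<Sum>a\<in>A. pmf M a * measure_pmf.prob N {t. (a,t) \<in> Y})"
    using assms by (simp add: fin_meas[of B N])
  finally show ?thesis .
qed

fun Lst :: "'a pmf list \<Rightarrow> 'a list pmf" where
  "Lst [] = return_pmf []"
| "Lst (M # Ms) = map_pmf (\<lambda>(a,t). a # t) (pair_pmf M (Lst Ms))"

lemma Lst_set: "(\<forall>M\<in>set Ms. set_pmf M \<subseteq> S) \<Longrightarrow> set_pmf (Lst Ms) \<subseteq> {l. set l \<subseteq> S \<and> length l = length Ms}"
  by (induction Ms) fastforce+

lemma Lst_meas:
  assumes "finite S" "\<forall>M\<in>set Ms. set_pmf M \<subseteq> S"
  shows "measure_pmf.prob (Lst Ms) X = G S (map pmf Ms) (indicator X)"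
  using assms(2)
proof (induction Ms arbitrary: X)
  case Nil then show ?case by simp
next
  case (Cons M Ms)
  have fin: "finite {l. set l \<subseteq> S \<and> length l = length Ms}"
    using assms(1) by (rule finite_lists_length_eq)
  have "measure_pmf.prob (Lst (M # Ms)) X = measure_pmf.prob (pair_pmf M (Lst Ms)) ((\<lambda>(a,t). a # t) -` X)"
    by simp
  also have "\<dots> = (\<Sum>a\<in>S. pmf M a * measure_pmf.prob (Lst Ms) {t. (a,t) \<in> (\<lambda>(a,t). a # t) -` X})"
    using Cons.prems assms(1) fin Lst_set[of Ms S] by (intro pair_meas) auto
  also have "\<dots> = (\<Sum>a\<in>S. pmf M a * G S (map pmf Ms) (indicator {t. a # t \<in> X}))"
    using Cons by simp
  also have "\<dots> = G S (map pmf (M # Ms)) (indicator X)"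
  proof -
    have "\<And>a. indicator {t. a # t \<in> X} = (\<lambda>l. indicator X (a # l) :: real)"
      by (auto simp: indicator_def)
    then show ?thesis by simp
  qed
  finally show ?case .
qed

lemma Lst_map: "map_pmf (map f) (Lst Ms) = Lst (map (map_pmf f) Ms)"
proof (induction Ms)
  case (Cons M Ms)
  have "map_pmf (map f) (Lst (M # Ms)) = map_pmf (\<lambda>(a,t). a # t) (map_pmf (\<lambda>(a,t). (f a, map f t)) (pair_pmf M (Lst Ms)))"
    by (simp add: pmf.map_comp o_def case_prod_unfold)
  also have "\<dots> = Lst (map (map_pmf f) (M # Ms))"
    by (simp add: map_pair Cons)
  finally show ?case .
qed simp



definition app :: "nat \<Rightarrow> nat list \<times> nat \<Rightarrow> nat list \<times> nat" where
  "app i = (\<lambda>(u,j). (u @ [i], j))"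
definition shift :: "nat \<Rightarrow> (nat list \<times> nat \<Rightarrow> bool) \<Rightarrow> (nat list \<times> nat \<Rightarrow> bool)" where
  "shift i \<omega> = (\<lambda>(u,j). \<omega> (u @ [i], j))"
definition Bs :: "nat \<Rightarrow> nat \<Rightarrow> (nat list \<times> nat) set" where
  "Bs n i = app i ` sg_edges n"
definition PP :: "real \<Rightarrow> (nat list \<times> nat) set \<Rightarrow> (nat list \<times> nat \<Rightarrow> bool) pmf" where
  "PP p A = Pi_pmf A False (\<lambda>_. bernoulli_pmf p)"

lemma finite_edges: "finite (sg_edges n)"
proof -
  have "sg_edges n \<subseteq> {w. set w \<subseteq> {..<6} \<and> length w = n} \<times> {..<3}"
    by (auto simp: sg_edges_def)
  moreover have "finite ({w. set w \<subseteq> {..<6::nat} \<and> length w = n} \<times> {..<3::nat})"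
    by (intro finite_cartesian_product finite_lists_length_eq) auto
  ultimately show ?thesis by (rule finite_subset)
qed

lemma finite_Bs: "finite (Bs n i)" by (simp add: Bs_def finite_edges)

lemma inj_app: "inj (app i)" by (auto simp: inj_def app_def)

lemma Bs_mem: "(u @ [k], j) \<in> Bs n i \<longleftrightarrow> k = i \<and> (u, j) \<in> sg_edges n"
  by (auto simp: Bs_def app_def)

lemma Pi_B: "map_pmf (shift i) (PP p (Bs n i)) = PP p (sg_edges n)"
proof -
  have "PP p (sg_edges n) = map_pmf (\<lambda>g. g \<circ> app i) (PP p (Bs n i))"
    unfolding PP_def
  proof (rule Pi_pmf_bij_betw)
    show "finite (sg_edges n)" by (rule finite_edges)
    show "bij_betw (app i) (sg_edges n) (Bs n i)" unfolding Bs_def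
      using inj_app by (auto simp: bij_betw_def intro: inj_on_subset)
    show "\<And>x. x \<notin> sg_edges n \<Longrightarrow> app i x \<notin> Bs n i" unfolding Bs_def
      by (simp add: inj_image_mem_iff[OF inj_app])
  qed
  moreover have "(\<lambda>g. g \<circ> app i) = shift i"
    by (auto simp: fun_eq_iff app_def shift_def)
  ultimately show ?thesis by simp
qed

lemma decomp:
  assumes "distinct is"
  shows "map_pmf (\<lambda>\<omega>. map (\<lambda>i. shift i \<omega>) is) (PP p (\<Union>i\<in>set is. Bs n i))
       = Lst (map (\<lambda>_. PP p (sg_edges n)) is)"
  using assms
proof (induction "is")
  case Nil then show ?case by (simp add: PP_def)
next
  case (Cons i "is")
  let ?R = "\<Union>k\<in>set is. Bs n k"
  have disj: "Bs n i \<inter> ?R = {}" using Cons.prems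
    by (auto simp: Bs_def app_def)
  have finR: "finite ?R" by (simp add: finite_Bs)
  have eq: "PP p (\<Union>k\<in>set (i#is). Bs n k) = map_pmf (\<lambda>(f,g) x. if x \<in> Bs n i then f x else g x)
             (pair_pmf (PP p (Bs n i)) (PP p ?R))"
    unfolding PP_def by (simp add: Pi_pmf_union[OF finite_Bs finR disj])
  have "map_pmf (\<lambda>\<omega>. map (\<lambda>k. shift k \<omega>) (i#is)) (PP p (\<Union>k\<in>set (i#is). Bs n k))
     = map_pmf (\<lambda>(f,g). shift i f # map (\<lambda>k. shift k g) is) (pair_pmf (PP p (Bs n i)) (PP p ?R))"
    unfolding eq pmf.map_comp
  proof (rule map_pmf_cong[OF refl])
    fix x assume x: "x \<in> set_pmf (pair_pmf (PP p (Bs n i)) (PP p ?R))"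
    obtain f g where fg: "x = (f,g)" by (cases x)
    have f0: "\<And>y. y \<notin> Bs n i \<Longrightarrow> f y = False"
      using x fg set_Pi_pmf_subset[OF finite_Bs, of n i False "\<lambda>_. bernoulli_pmf p"] unfolding PP_def by auto
    have g0: "\<And>y. y \<notin> ?R \<Longrightarrow> g y = False"
      using x fg set_Pi_pmf_subset[OF finR, of False "\<lambda>_. bernoulli_pmf p"] unfolding PP_def by auto
    have s1: "shift i (\<lambda>x. if x \<in> Bs n i then f x else g x) = shift i f"
    proof (rule ext, clarify)
      fix u j
      show "shift i (\<lambda>x. if x \<in> Bs n i then f x else g x) (u, j) = shift i f (u, j)"
      proof (cases "(u @ [i], j) \<in> Bs n i")
        case False
        then have "(u @ [i], j) \<notin> ?R" using Cons.prems by (auto simp: Bs_mem)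
        then show ?thesis using False f0 g0 by (simp add: shift_def)
      qed (simp add: shift_def)
    qed
    have s2: "\<And>k. k \<in> set is \<Longrightarrow> shift k (\<lambda>x. if x \<in> Bs n i then f x else g x) = shift k g"
      using Cons.prems by (auto simp: fun_eq_iff shift_def Bs_mem)
    show "((\<lambda>\<omega>. map (\<lambda>k. shift k \<omega>) (i # is)) \<circ> (\<lambda>(f, g) x. if x \<in> Bs n i then f x else g x)) x
        = (\<lambda>(f, g). shift i f # map (\<lambda>k. shift k g) is) x"
      using s1 s2 fg by simp
  qed
  also have "\<dots> = map_pmf (\<lambda>(a,t). a # t) (map_pmf (\<lambda>(f,g). (shift i f, map (\<lambda>k. shift k g) is))
        (pair_pmf (PP p (Bs n i)) (PP p ?R)))"
    by (simp add: pmf.map_comp o_def case_prod_unfold)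
  also have "\<dots> = map_pmf (\<lambda>(a,t). a # t) (pair_pmf (map_pmf (shift i) (PP p (Bs n i)))
        (map_pmf (\<lambda>g. map (\<lambda>k. shift k g) is) (PP p ?R)))"
    by (simp add: map_pair)
  also have "\<dots> = Lst (map (\<lambda>_. PP p (sg_edges n)) (i # is))"
    using Cons by (simp add: Pi_B)
  finally show ?case .
qed

lemma edges_Suc: "sg_edges (Suc n) = (\<Union>i\<in>set [0,1,2,3,4,5]. Bs n i)"
proof (intro equalityI subsetI)
  fix x assume "x \<in> sg_edges (Suc n)"
  then obtain v j where x: "x = (v, j)" "length v = Suc n" "set v \<subseteq> {..<6}" "j < 3"
    by (auto simp: sg_edges_def)
  then obtain u i where v: "v = u @ [i]" by (metis append_butlast_last_id list.size(3) nat.simps(3))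
  have "i < 6" "length u = n" "set u \<subseteq> {..<6}" using x v by auto
  then have "x \<in> Bs n i" "i \<in> set [0,1,2,3,4,5]" using x v by (auto simp: Bs_mem sg_edges_def)
  then show "x \<in> (\<Union>i\<in>set [0,1,2,3,4,5]. Bs n i)" by blast
next
  fix x assume "x \<in> (\<Union>i\<in>set [0,1,2,3,4,5::nat]. Bs n i)"
  then show "x \<in> sg_edges (Suc n)" by (auto simp: Bs_def app_def sg_edges_def)
qed

definition Lam :: "real \<Rightarrow> nat \<Rightarrow> nat pmf" where
  "Lam p n = map_pmf (\<lambda>\<omega>. pat n \<omega> []) (perc_measure p n)"

lemma pat_Suc_nil: "pat (Suc n) \<omega> [] = CombL (map (\<lambda>\<omega>'. pat n \<omega>' []) (map (\<lambda>i. shift i \<omega>) [0,1,2,3,4,5]))"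
proof -
  have "\<And>i. pat n \<omega> [i] = pat n (shift i \<omega>) []"
    using pat_shift[of n \<omega> "[]"] by (simp add: shift_def)
  then show ?thesis by (simp add: CombL_def)
qed

lemma Lam_Suc: "Lam p (Suc n) = map_pmf CombL (Lst (replicate 6 (Lam p n)))"
proof -
  have "Lam p (Suc n) = map_pmf (\<lambda>\<omega>. CombL (map (\<lambda>\<omega>'. pat n \<omega>' []) (map (\<lambda>i. shift i \<omega>) [0,1,2,3,4,5])))
       (PP p (\<Union>i\<in>set [0,1,2,3,4,5]. Bs n i))"
    unfolding Lam_def perc_measure_def PP_def edges_Suc pat_Suc_nil ..
  also have "\<dots> = map_pmf (\<lambda>l. CombL (map (\<lambda>\<omega>'. pat n \<omega>' []) l))
       (map_pmf (\<lambda>\<omega>. map (\<lambda>i. shift i \<omega>) [0,1,2,3,4,5]) (PP p (\<Union>i\<in>set [0,1,2,3,4,5]. Bs n i)))"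
    by (simp add: pmf.map_comp o_def)
  also have "\<dots> = map_pmf (\<lambda>l. CombL (map (\<lambda>\<omega>'. pat n \<omega>' []) l)) (Lst (replicate 6 (PP p (sg_edges n))))"
    by (subst decomp) (simp_all add: replicate6)
  also have "\<dots> = map_pmf CombL (map_pmf (map (\<lambda>\<omega>'. pat n \<omega>' [])) (Lst (replicate 6 (PP p (sg_edges n)))))"
    by (simp add: pmf.map_comp o_def)
  also have "\<dots> = map_pmf CombL (Lst (replicate 6 (Lam p n)))"
    by (simp add: Lst_map Lam_def perc_measure_def PP_def)
  finally show ?thesis .
qed

lemma set_Lam: "set_pmf (Lam p n) \<subseteq> {..<5}"
  by (auto simp: Lam_def pat_lt)

lemma tail_Suc:
  assumes "finite U"
  shows "sum (pmf (Lam p (Suc n))) U = G {..<5} (replicate 6 (pmf (Lam p n))) (\<lambda>l. indicator U (CombL l))"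
proof -
  have "sum (pmf (Lam p (Suc n))) U = measure_pmf.prob (Lam p (Suc n)) U"
    using assms by (simp add: measure_measure_pmf_finite)
  also have "\<dots> = measure_pmf.prob (Lst (replicate 6 (Lam p n))) (CombL -` U)"
    by (simp add: Lam_Suc)
  also have "\<dots> = G {..<5} (map pmf (replicate 6 (Lam p n))) (indicator (CombL -` U))"
    using set_Lam by (intro Lst_meas) auto
  also have "indicator (CombL -` U) = (\<lambda>l. indicator U (CombL l) :: real)"
    by (auto simp: indicator_def)
  finally show ?thesis by simp
qed



lemma Pi_list:
  assumes "distinct es"
  shows "map_pmf (\<lambda>\<omega>. map \<omega> es) (Pi_pmf (set es) dflt (\<lambda>_. M)) = Lst (map (\<lambda>_. M) es)"
  using assms
proof (induction es)
  case Nil then show ?case by simp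
next
  case (Cons e es)
  have "map_pmf (\<lambda>\<omega>. map \<omega> (e # es)) (Pi_pmf (set (e # es)) dflt (\<lambda>_. M))
      = map_pmf (\<lambda>\<omega>. map \<omega> (e # es)) (map_pmf (\<lambda>(y, f). f(e := y)) (pair_pmf M (Pi_pmf (set es) dflt (\<lambda>_. M))))"
    using Cons.prems by (simp add: Pi_pmf_insert)
  also have "\<dots> = map_pmf (\<lambda>(a,t). a # t) (map_pmf (\<lambda>(y,f). (y, map f es)) (pair_pmf M (Pi_pmf (set es) dflt (\<lambda>_. M))))"
    unfolding pmf.map_comp
    by (rule map_pmf_cong) (use Cons.prems in \<open>auto intro!: map_cong\<close>)
  also have "\<dots> = map_pmf (\<lambda>(a,t). a # t) (pair_pmf (map_pmf (\<lambda>y. y) M) (map_pmf (\<lambda>f. map f es) (Pi_pmf (set es) dflt (\<lambda>_. M))))"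
    by (simp only: map_pair)
  also have "\<dots> = Lst (map (\<lambda>_. M) (e # es))"
    using Cons by simp
  finally show ?case .
qed

lemma edges0: "sg_edges 0 = set [([],0),([],1),([],2)]"
  by (auto simp: sg_edges_def)

lemma Lam0: "Lam p 0 = map_pmf (\<lambda>l. cls (l!0) (l!1) (l!2)) (Lst [bernoulli_pmf p, bernoulli_pmf p, bernoulli_pmf p])"
proof -
  have "Lam p 0 = map_pmf (\<lambda>l. cls (l!0) (l!1) (l!2))
     (map_pmf (\<lambda>\<omega>. map \<omega> [([]::nat list,0::nat),([],1),([],2)]) (Pi_pmf (set [([]::nat list,0::nat),([],1),([],2)]) False (\<lambda>_. bernoulli_pmf p)))"
    unfolding Lam_def perc_measure_def edges0 by (simp add: pmf.map_comp o_def One_nat_def)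
  also have "\<dots> = map_pmf (\<lambda>l. cls (l!0) (l!1) (l!2)) (Lst [bernoulli_pmf p, bernoulli_pmf p, bernoulli_pmf p])"
    by (subst Pi_list) simp_all
  finally show ?thesis .
qed

lemma tail0:
  assumes "finite U" "0 \<le> p" "p \<le> 1"
  shows "sum (pmf (Lam p 0)) U =
    (1-p)*((1-p)*((1-p) * indicator U (cls False False False) + p * indicator U (cls False False True))
           + p*((1-p) * indicator U (cls False True False) + p * indicator U (cls False True True)))
  + p*((1-p)*((1-p) * indicator U (cls True False False) + p * indicator U (cls True False True))
           + p*((1-p) * indicator U (cls True True False) + p * indicator U (cls True True True)))"
proof -
  have "sum (pmf (Lam p 0)) U = measure_pmf.prob (Lam p 0) U"
    using assms by (simp add: measure_measure_pmf_finite)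
  also have "\<dots> = measure_pmf.prob (Lst [bernoulli_pmf p, bernoulli_pmf p, bernoulli_pmf p])
       ((\<lambda>l. cls (l!0) (l!1) (l!2)) -` U)"
    by (simp add: Lam0)
  also have "\<dots> = G UNIV (map pmf [bernoulli_pmf p, bernoulli_pmf p, bernoulli_pmf p])
       (indicator ((\<lambda>l. cls (l!0) (l!1) (l!2)) -` U))"
    by (intro Lst_meas) auto
  also have "\<dots> = (1-p)*((1-p)*((1-p) * indicator U (cls False False False) + p * indicator U (cls False False True))
           + p*((1-p) * indicator U (cls False True False) + p * indicator U (cls False True True)))
  + p*((1-p)*((1-p) * indicator U (cls True False False) + p * indicator U (cls True False True))
           + p*((1-p) * indicator U (cls True True False) + p * indicator U (cls True True True)))"
    using assms by (simp add: UNIV_bool indicator_def algebra_simps)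
  finally show ?thesis .
qed

lemma dom0:
  assumes p: "1/4 \<le> p" "p \<le> 1"
  shows "domi w (pmf (Lam p 0))"
proof -
  have p0: "0 \<le> p" using p by simp
  note T = tail0[OF _ p0 p(2)]
  have a4: "sum (pmf (Lam p 0)) {4} = 3*p^2 - 2*p^3"
    by (subst T) (simp_all add: cls_def algebra_simps power2_eq_square power3_eq_cube)
  have a14: "sum (pmf (Lam p 0)) {1,4} = p + p^2 - p^3"
    by (subst T) (simp_all add: cls_def algebra_simps power2_eq_square power3_eq_cube)
  have a24: "sum (pmf (Lam p 0)) {2,4} = p + p^2 - p^3"
    by (subst T) (simp_all add: cls_def algebra_simps power2_eq_square power3_eq_cube)
  have a34: "sum (pmf (Lam p 0)) {3,4} = p + p^2 - p^3"
    by (subst T) (simp_all add: cls_def algebra_simps power2_eq_square power3_eq_cube)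
  have a124: "sum (pmf (Lam p 0)) {1,2,4} = 2*p - p^2"
    by (subst T) (simp_all add: cls_def algebra_simps power2_eq_square power3_eq_cube)
  have a134: "sum (pmf (Lam p 0)) {1,3,4} = 2*p - p^2"
    by (subst T) (simp_all add: cls_def algebra_simps power2_eq_square power3_eq_cube)
  have a234: "sum (pmf (Lam p 0)) {2,3,4} = 2*p - p^2"
    by (subst T) (simp_all add: cls_def algebra_simps power2_eq_square power3_eq_cube)
  have a1234: "sum (pmf (Lam p 0)) {1,2,3,4} = 3*p - 3*p^2 + p^3"
    by (subst T) (simp_all add: cls_def algebra_simps power2_eq_square power3_eq_cube)
  have a01234: "sum (pmf (Lam p 0)) {0,1,2,3,4} = 1"
    by (subst T) (simp_all add: cls_def algebra_simps power2_eq_square power3_eq_cube)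
  have q: "0 \<le> p - 1/4" using p by simp
  have i4: "10/64 \<le> 3*p^2 - 2*p^3"
  proof -
    have e: "3*p^2 - 2*p^3 - 10/64 = (p - 1/4) * (-2*p^2 + 5*p/2 + 5/8)"
      by (simp add: field_simps power2_eq_square power3_eq_cube)
    have "0 \<le> p * (5/2 - 2*p)" using p by simp
    then have "0 \<le> -2*p^2 + 5*p/2 + 5/8" by (simp add: algebra_simps power2_eq_square)
    then have "0 \<le> (p - 1/4) * (-2*p^2 + 5*p/2 + 5/8)" using q by simp
    then show ?thesis using e by linarith
  qed
  have i14: "19/64 \<le> p + p^2 - p^3"
  proof -
    have e: "p + p^2 - p^3 - 19/64 = (p - 1/4) * (19/16 + 3*p/4 - p^2)"
      by (simp add: field_simps power2_eq_square power3_eq_cube)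
    have "p^2 \<le> 1" using p by (simp add: power_le_one)
    then have "0 \<le> 19/16 + 3*p/4 - p^2" using p by simp
    then have "0 \<le> (p - 1/4) * (19/16 + 3*p/4 - p^2)" using q by simp
    then show ?thesis using e by linarith
  qed
  have i124: "28/64 \<le> 2*p - p^2"
  proof -
    have e: "2*p - p^2 - 28/64 = (p - 1/4) * (7/4 - p)"
      by (simp add: field_simps power2_eq_square)
    have "0 \<le> (p - 1/4) * (7/4 - p)" using q p by simp
    then show ?thesis using e by linarith
  qed
  have i1234: "37/64 \<le> 3*p - 3*p^2 + p^3"
  proof -
    have e: "3*p - 3*p^2 + p^3 - 37/64 = (p - 1/4) * ((p - 11/8)^2 + 27/64)"
      by (simp add: field_simps power2_eq_square power3_eq_cube)
    have "0 \<le> (p - 1/4) * ((p - 11/8)^2 + 27/64)" using q by simp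
    then show ?thesis using e by linarith
  qed
  show ?thesis unfolding domi_def ups_def
    using a4 a14 a24 a34 a124 a134 a234 a1234 a01234 i4 i14 i124 i1234
    by (simp add: w_def)
qed

lemma nonneg_w: "nonneg {..<5} (replicate 6 w)" by (simp add: nonneg_def w_def)
lemma nonneg_pmf: "nonneg {..<5} (replicate 6 (pmf M))" by (simp add: nonneg_def)

lemma main_dom:
  assumes p: "1/4 \<le> p" "p \<le> 1"
  shows "domi w (pmf (Lam p n))"
proof (induction n)
  case 0 then show ?case by (rule dom0[OF p])
next
  case (Suc n)
  show ?case unfolding domi_def
  proof
    fix U assume U: "U \<in> set ups"
    have fin: "finite U" using U by (auto simp: ups_def)
    have "sum w U \<le> (\<Sum>q<5. phi q * indicator U q)" by (rule num_dom[OF U])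
    also have "\<dots> = G {..<5} (replicate 6 w) (\<lambda>l. indicator U (CombL l))"
      by (rule G6[symmetric])
    also have "\<dots> \<le> G {..<5} (replicate 6 (pmf (Lam p n))) (\<lambda>l. indicator U (CombL l))"
    proof (rule G_dom)
      show "list_all2 domi (replicate 6 w) (replicate 6 (pmf (Lam p n)))"
        using Suc by (simp add: replicate6)
      show "nonneg {..<5} (replicate 6 w)" by (rule nonneg_w)
      show "nonneg {..<5} (replicate 6 (pmf (Lam p n)))" by (rule nonneg_pmf)
      show "\<And>l. 0 \<le> (indicator U (CombL l) :: real)" by simp
      fix l l' :: "nat list" assume "list_all2 lec l l'" "length l = length (replicate 6 w)"
      then have "lec (CombL l) (CombL l')" by (intro CombL_mono) auto
      then show "(indicator U (CombL l) :: real) \<le> indicator U (CombL l')"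
        using up_ups[OF U CombL_lt CombL_lt] by (auto simp: indicator_def)
    qed
    also have "\<dots> = sum (pmf (Lam p (Suc n))) U"
      by (rule tail_Suc[OF fin, symmetric])
    finally show "sum w U \<le> sum (pmf (Lam p (Suc n))) U" .
  qed
qed

lemma cross_lb:
  assumes p: "1/4 \<le> p" "p \<le> 1"
  shows "19/64 \<le> crossing_prob p n"
proof -
  have "19/64 = sum w {1,4}" by (simp add: w_def)
  also have "\<dots> \<le> sum (pmf (Lam p n)) {1,4}"
    using main_dom[OF p, of n] unfolding domi_def ups_def by simp
  also have "\<dots> = measure_pmf.prob (Lam p n) {1,4}"
    by (simp add: measure_measure_pmf_finite)
  also have "\<dots> = measure_pmf.prob (perc_measure p n) {\<omega>. c01 (pat n \<omega> [])}"
    unfolding Lam_def by (simp add: c01_def vimage_def)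
  also have "\<dots> \<le> crossing_prob p n"
    unfolding crossing_prob_def
  proof (rule measure_pmf.finite_measure_mono)
    show "{\<omega>. c01 (pat n \<omega> [])} \<subseteq> {\<omega>. (Corner 0, Corner 1) \<in> (sg_open_adj n \<omega>)\<^sup>*}"
      using sound[of "[]" "Corner 0" "Corner 1" "Corner 2" n] by auto
  qed simp
  finally show ?thesis .
qed

lemma cross0: "crossing_prob 0 n = 0"
proof -
  have b: "bernoulli_pmf 0 = return_pmf False"
    by (rule pmf_eqI) (simp add: pmf_bernoulli_True pmf_bernoulli_False split: split_indicator)
  have "perc_measure 0 n = return_pmf (\<lambda>_. False)"
    unfolding perc_measure_def b by (simp add: finite_edges)
  moreover have "sg_open_adj n (\<lambda>_. False) = {}" by (simp add: sg_open_adj_def)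
  ultimately show ?thesis by (simp add: crossing_prob_def)
qed

theorem theorem4p5:
  shows "p_S < 0.282"
proof -
  let ?X = "{p \<in> {0..1}. (\<lambda>n. crossing_prob p n) \<longlonglongrightarrow> 0}"
  have ne: "?X \<noteq> {}"
  proof -
    have "crossing_prob 0 = (\<lambda>n. 0)" by (rule ext) (rule cross0)
    then have "(0::real) \<in> ?X" by simp
    then show ?thesis by blast
  qed
  have ub: "\<And>x. x \<in> ?X \<Longrightarrow> x \<le> 1/4"
  proof (rule ccontr)
    fix x assume x: "x \<in> ?X" "\<not> x \<le> 1/4"
    then have "(\<lambda>n. crossing_prob x n) \<longlonglongrightarrow> 0" "1/4 \<le> x" "x \<le> 1" by auto
    have x14: "1/4 \<le> x" "x \<le> 1" using x by auto
    have "\<forall>n\<ge>0. 19/64 \<le> crossing_prob x n" using cross_lb[OF x14] by auto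
    then have "19/64 \<le> (0::real)"
      using LIMSEQ_le_const[of "\<lambda>n. crossing_prob x n" 0 "19/64"] x by auto
    then show False by simp
  qed
  have "p_S \<le> 1/4" unfolding p_S_def by (rule cSup_least[OF ne ub])
  then show ?thesis by simp
qed


end
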